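(* Let $\sigma(u)=1/(1+e^{-u})$, $\sigma_\tau(u)=\sigma(u/\tau)$ for $\tau>0$, and let $z$ be a standard logistic random variable with density $p_Z(u)=\sigma(u)(1-\sigma(u))$. Let $\eta\in\mathbb{R}$ and let $\mathcal L:[0,1]\to\mathbb{R}$ be continuously differentiable. Consider the binary variable $x\in\{0,1\}$ with $P(x=1)=\sigma(\eta)$, whose true gradient is $\frac{d}{d\eta}\mathbb{E}[\mathcal L(x)]=p_Z(\eta)(\mathcal L(1)-\mathcal L(0))$, and the Gumbel-Softmax estimator $\hat G_\tau=\frac{d}{d\eta}\mathcal L(\sigma_\tau(\eta-z))$. Then $\lim_{\tau\to0^+}\mathbb{E}_z[\hat G_\tau]=p_Z(\eta)(\mathcal L(1)-\mathcal L(0))$, and the bias satisfies $\mathbb{E}_z[\hat G_\tau]-p_Z(\eta)(\mathcal L(1)-\mathcal L(0))=O(\tau)$ as $\tau\to0^+$. *)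

theory Defs
  imports "HOL-Analysis.Analysis" "HOL-Library.Landau_Symbols"
begin

definition sigmoid :: "real \<Rightarrow> real" where
  "sigmoid u = 1 / (1 + exp (- u))"

definition sigmoid_temp :: "real \<Rightarrow> real \<Rightarrow> real" where
  "sigmoid_temp \<tau> u = sigmoid (u / \<tau>)"

definition logistic_density :: "real \<Rightarrow> real" where
  "logistic_density u = sigmoid u * (1 - sigmoid u)"

definition gs_estimator :: "(real \<Rightarrow> real) \<Rightarrow> real \<Rightarrow> real \<Rightarrow> real \<Rightarrow> real" where
  "gs_estimator L \<tau> \<eta> z = deriv (\<lambda>e. L (sigmoid_temp \<tau> (e - z))) \<eta>"

definition gs_expectation :: "(real \<Rightarrow> real) \<Rightarrow> real \<Rightarrow> real \<Rightarrow> real" where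
  "gs_expectation L \<tau> \<eta> = (LINT z|lborel. logistic_density z * gs_estimator L \<tau> \<eta> z)"

end

theory Submission imports Defs begin

lemma sigmoid_pos: "0 < sigmoid u" and sigmoid_lt1: "sigmoid u < 1"
  unfolding sigmoid_def by (auto simp: add_pos_pos)

lemma ld_exp: "logistic_density u = exp (-u) / (1 + exp (-u))^2"
proof -
  have "1 + exp (-u) > 0" by (simp_all add: add_pos_pos)
  then show ?thesis unfolding logistic_density_def sigmoid_def
    by (simp add: field_simps power2_eq_square)
qed

lemma sigmoid_deriv: "(sigmoid has_real_derivative logistic_density u) (at u)"
proof -
  have "((\<lambda>u. 1 / (1 + exp (- u))) has_real_derivative exp (-u) / (1 + exp (-u))^2) (at u)"
  proof -
    have "1 + exp (-u) > 0" by (simp add: add_pos_pos)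
    then show ?thesis by (auto intro!: derivative_eq_intros simp: power2_eq_square field_simps)
  qed
  moreover have "exp (-u) / (1 + exp (-u))^2 = logistic_density u"
    by (simp add: ld_exp)
  ultimately show ?thesis unfolding sigmoid_def[abs_def] by simp
qed

lemma ld_nonneg: "0 \<le> logistic_density u"
  unfolding logistic_density_def using sigmoid_pos[of u] sigmoid_lt1[of u] by simp

lemma ld_le: "logistic_density u \<le> 1/4"
proof -
  have "0 \<le> (2 * sigmoid u - 1)^2" by simp
  then show ?thesis unfolding logistic_density_def by (simp add: power2_eq_square algebra_simps)
qed

lemma ld_deriv: "(logistic_density has_real_derivative logistic_density u * (1 - 2 * sigmoid u)) (at u)"
proof -
  have "((\<lambda>u. sigmoid u * (1 - sigmoid u)) has_real_derivative
     logistic_density u * (1 - sigmoid u) + sigmoid u * (- logistic_density u)) (at u)"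
    by (auto intro!: derivative_eq_intros sigmoid_deriv)
  moreover have "logistic_density u * (1 - sigmoid u) + sigmoid u * (- logistic_density u)
     = logistic_density u * (1 - 2 * sigmoid u)" by algebra
  ultimately show ?thesis unfolding logistic_density_def[abs_def] by simp
qed

lemma ld_lip: "\<bar>logistic_density x - logistic_density y\<bar> \<le> \<bar>x - y\<bar>"
proof -
  have bd: "\<bar>logistic_density u * (1 - 2 * sigmoid u)\<bar> \<le> 1" for u
  proof -
    have "\<bar>1 - 2 * sigmoid u\<bar> \<le> 1" using sigmoid_pos[of u] sigmoid_lt1[of u] by simp
    moreover have "\<bar>logistic_density u\<bar> \<le> 1" using ld_nonneg[of u] ld_le[of u] by simp
    ultimately show ?thesis by (simp add: abs_mult mult_le_one)
  qed
  have *: "\<bar>logistic_density b - logistic_density a\<bar> \<le> b - a" if "a < b" for a b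
  proof -
    have "\<exists>z>a. z < b \<and> logistic_density b - logistic_density a = (b - a) * (logistic_density z * (1 - 2 * sigmoid z))"
      by (rule MVT2[OF that]) (rule ld_deriv)
    then obtain z where "logistic_density b - logistic_density a = (b - a) * (logistic_density z * (1 - 2 * sigmoid z))"
      by blast
    then have "\<bar>logistic_density b - logistic_density a\<bar> = (b - a) * \<bar>logistic_density z * (1 - 2 * sigmoid z)\<bar>"
      using that by (simp add: abs_mult)
    also have "\<dots> \<le> (b - a) * 1" using bd[of z] that by (intro mult_left_mono) auto
    finally show ?thesis by simp
  qed
  show ?thesis
    using *[of x y] *[of y x] by (cases x y rule: linorder_cases) auto
qed

lemma ld_sym: "logistic_density (- u) = logistic_density u"
proof -
  have "1 + exp u > 0" "1 + exp (-u) > 0" by (simp_all add: add_pos_pos)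
  then show ?thesis unfolding logistic_density_def sigmoid_def
    by (simp add: field_simps exp_minus)
qed

lemma ld_moment_aux: "u \<ge> 0 \<Longrightarrow> u * logistic_density u \<le> 8 * logistic_density (u / 2)"
proof -
  assume u: "u \<ge> 0"
  define b where "b = exp (- u / 2)"
  have b0: "0 < b" and b1: "b \<le> 1" using u by (auto simp: b_def)
  have eb: "exp (-u) = b^2" unfolding b_def by (simp add: power2_eq_square flip: exp_add)
  have "1 + u / 2 \<le> exp (u / 2)" using exp_ge_add_one_self[of "u/2"] by simp
  then have ub: "u * b \<le> 2"
    unfolding b_def using u by (simp add: exp_minus field_simps)
  have "u * logistic_density u = u * b^2 / (1 + b^2)^2" by (simp add: ld_exp eb)
  also have "\<dots> \<le> u * b^2"
  proof -
    have "1 \<le> (1 + b^2)^2" by (simp add: one_le_power)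
    then have "u * b^2 / (1 + b^2)^2 \<le> u * b^2 / 1"
    proof (rule divide_left_mono)
      have "0 < 1 + b^2" by (simp add: add_pos_nonneg)
      then show "0 < (1 + b^2)^2 * 1" by simp
    qed (use u in auto)
    then show ?thesis by simp
  qed
  also have "\<dots> \<le> 2 * b" using ub b0 by (simp add: power2_eq_square mult_right_mono)
  also have "\<dots> \<le> 8 * (b / (1 + b)^2)"
  proof -
    have "(1 + b)^2 \<le> 2^2" using b0 b1 by (intro power_mono) auto
    then have "(1 + b)^2 \<le> 4" by simp
    then show ?thesis using b0 by (simp add: field_simps)
  qed
  also have "b / (1 + b)^2 = logistic_density (u / 2)" by (simp add: ld_exp b_def)
  finally show ?thesis .
qed


lemma sigmoid_cont: "continuous_on A sigmoid"
  by (intro continuous_at_imp_continuous_on ballI DERIV_isCont[OF sigmoid_deriv])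

lemma ld_cont: "continuous_on A logistic_density"
  by (intro continuous_at_imp_continuous_on ballI DERIV_isCont[OF ld_deriv])

lemma ld_cont_comp[continuous_intros]: "continuous_on A f \<Longrightarrow> continuous_on A (\<lambda>x. logistic_density (f x))"
  by (rule continuous_on_compose2[OF ld_cont[of UNIV]]) auto

lemma sigmoid_bot: "(sigmoid \<longlongrightarrow> 0) at_bot"
proof -
  have "filterlim (\<lambda>u::real. - u) at_top at_bot" by (rule filterlim_uminus_at_top_at_bot)
  then have "filterlim (\<lambda>u::real. exp (- u)) at_top at_bot"
    by (rule filterlim_compose[OF exp_at_top])
  then have "filterlim (\<lambda>u::real. 1 + exp (- u)) at_top at_bot"
    by (rule filterlim_tendsto_add_at_top[OF tendsto_const])
  then have "((\<lambda>u::real. inverse (1 + exp (- u))) \<longlongrightarrow> 0) at_bot"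
    by (rule Limits.tendsto_inverse_0_at_top)
  then show ?thesis unfolding sigmoid_def[abs_def] by (simp add: divide_inverse)
qed

lemma sigmoid_top: "(sigmoid \<longlongrightarrow> 1) at_top"
proof -
  have "filterlim (\<lambda>u::real. - u) at_bot at_top" by (rule filterlim_uminus_at_bot_at_top)
  then have "((\<lambda>u::real. exp (- u)) \<longlongrightarrow> 0) at_top"
    by (rule filterlim_compose[OF exp_at_bot])
  then have "((\<lambda>u::real. 1 / (1 + exp (- u))) \<longlongrightarrow> 1 / (1 + 0)) at_top"
    by (intro tendsto_intros) auto
  then show ?thesis unfolding sigmoid_def[abs_def] by simp
qed

lemma ld_integrable: "integrable lborel logistic_density"
proof -
  have "set_integrable lborel (einterval (-\<infinity>) \<infinity>) logistic_density"
  proof (rule interval_integral_FTC_nonneg[where F=sigmoid and A=0 and B=1])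
    show "(- \<infinity>::ereal) < \<infinity>" by simp
    show "\<And>x. DERIV sigmoid x :> logistic_density x" by (rule sigmoid_deriv)
    show "\<And>x. isCont logistic_density x" by (rule DERIV_isCont[OF ld_deriv])
    show "AE x in lborel. - \<infinity> < ereal x \<longrightarrow> ereal x < \<infinity> \<longrightarrow> 0 \<le> logistic_density x"
      by (simp add: ld_nonneg)
    show "((sigmoid \<circ> real_of_ereal) \<longlongrightarrow> 0) (at_right (- \<infinity>))"
      unfolding ereal_tendsto_simps1 by (rule sigmoid_bot)
    show "((sigmoid \<circ> real_of_ereal) \<longlongrightarrow> 1) (at_left \<infinity>)"
      unfolding ereal_tendsto_simps1 by (rule sigmoid_top)
  qed
  then show ?thesis by (simp add: set_integrable_def)
qed

lemma ld_moment: "\<bar>u\<bar> * logistic_density u \<le> 8 * logistic_density (u / 2)"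
proof (cases "u \<ge> 0")
  case True then show ?thesis using ld_moment_aux[of u] by simp
next
  case False
  then have "\<bar>u\<bar> * logistic_density u = (-u) * logistic_density (-u)" by (simp add: ld_sym)
  also have "\<dots> \<le> 8 * logistic_density (-u / 2)" using False ld_moment_aux[of "-u"] by simp
  also have "logistic_density (-u / 2) = logistic_density (u / 2)" using ld_sym[of "u/2"] by simp
  finally show ?thesis .
qed

lemma ld_moment_integrable: "integrable lborel (\<lambda>u. \<bar>u\<bar> * logistic_density u)"
proof (rule Bochner_Integration.integrable_bound[where f="\<lambda>u. 8 * logistic_density (u/2)"])
  have "integrable lborel (\<lambda>x. logistic_density (0 + (1/2) * x))"
    by (rule lborel_integrable_real_affine[OF ld_integrable]) simp
  then show "integrable lborel (\<lambda>u. 8 * logistic_density (u / 2))" by simp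
  show "(\<lambda>u. \<bar>u\<bar> * logistic_density u) \<in> borel_measurable lborel"
    by (simp add: borel_measurable_continuous_onI continuous_intros)
  show "AE x in lborel. norm (\<bar>x\<bar> * logistic_density x) \<le> norm (8 * logistic_density (x / 2))"
    using ld_moment ld_nonneg by (simp add: abs_mult)
qed


theorem propositionE1:
  fixes L L' :: "real \<Rightarrow> real" and \<eta> :: real
  assumes deriv_L: "\<And>x. x \<in> {0..1} \<Longrightarrow> (L has_real_derivative L' x) (at x within {0..1})"
    and cont_L': "continuous_on {0..1} L'"
  shows "((\<lambda>\<tau>. gs_expectation L \<tau> \<eta>) \<longlongrightarrow> logistic_density \<eta> * (L 1 - L 0)) (at_right 0)
         \<and> (\<lambda>\<tau>. gs_expectation L \<tau> \<eta> - logistic_density \<eta> * (L 1 - L 0)) \<in> O[at_right 0](\<lambda>\<tau>. \<tau>)"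
proof -
  have "bounded (L' ` {0..1})"
    by (rule compact_imp_bounded[OF compact_continuous_image[OF cont_L' compact_Icc]])
  then obtain M0 where M0': "\<forall>x\<in>{0..1}. \<bar>L' x\<bar> \<le> M0"
    unfolding bounded_iff by auto
  then have M0: "\<And>x. x \<in> {0..1} \<Longrightarrow> \<bar>L' x\<bar> \<le> M0" by blast
  define M where "M = max M0 0"
  have M: "\<And>x. x \<in> {0..1} \<Longrightarrow> \<bar>L' x\<bar> \<le> M" and M_nn: "0 \<le> M"
    using M0 by (auto simp: M_def intro: le_max_iff_disj[THEN iffD2])
  define g where "g u = L' (sigmoid u) * logistic_density u" for u
  have sig01: "sigmoid u \<in> {0..1}" for u using sigmoid_pos[of u] sigmoid_lt1[of u] by simp
  have Lder: "(L has_real_derivative L' x) (at x)" if "0 < x" "x < 1" for x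
    using deriv_L[of x] that at_within_Icc_at[OF that] by simp
  have LSder: "((\<lambda>u. L (sigmoid u)) has_real_derivative g u) (at u)" for u
    unfolding g_def
    by (rule DERIV_chain2[OF Lder sigmoid_deriv]) (use sigmoid_pos[of u] sigmoid_lt1[of u] in auto)
  have contLS': "continuous_on UNIV (\<lambda>u. L' (sigmoid u))"
    by (rule continuous_on_compose2[OF cont_L' sigmoid_cont]) (use sig01 in auto)
  have contg: "continuous_on UNIV g"
    unfolding g_def[abs_def] by (intro continuous_intros contLS')
  have g_meas: "g \<in> borel_measurable borel"
    by (rule borel_measurable_continuous_onI[OF contg])
  have g_bound: "\<bar>g u\<bar> \<le> M * logistic_density u" for u
    unfolding g_def using M[OF sig01[of u]] ld_nonneg[of u]
    by (simp add: abs_mult mult_right_mono)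
  have g_int: "integrable lborel g"
  proof (rule Bochner_Integration.integrable_bound[where f="\<lambda>u. M * logistic_density u"])
    show "integrable lborel (\<lambda>u. M * logistic_density u)"
      by (intro integrable_mult_right ld_integrable)
    show "g \<in> borel_measurable lborel" using g_meas by simp
    show "AE x in lborel. norm (g x) \<le> norm (M * logistic_density x)"
      using g_bound M_nn ld_nonneg by (simp add: abs_mult)
  qed
  have contL: "continuous_on {0..1} L"
    unfolding continuous_on_eq_continuous_within
    using deriv_L DERIV_continuous by blast
  have g_total: "(LINT u|lborel. g u) = L 1 - L 0"
  proof -
    have "(LBINT x=-\<infinity>..\<infinity>. g x) = L 1 - L 0"
    proof (rule interval_integral_FTC_integrable[where F="\<lambda>u. L (sigmoid u)"])
      show "(- \<infinity>::ereal) < \<infinity>" by simp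
      show "((\<lambda>u. L (sigmoid u)) has_vector_derivative g x) (at x)" for x
        using LSder[of x] by (simp add: has_real_derivative_iff_has_vector_derivative)
      show "isCont g x" for x using contg by (simp add: continuous_on_eq_continuous_at)
      show "set_integrable lborel (einterval (- \<infinity>) \<infinity>) g"
        using g_int by (simp add: set_integrable_def)
      show "(((\<lambda>u. L (sigmoid u)) \<circ> real_of_ereal) \<longlongrightarrow> L 0) (at_right (- \<infinity>))"
        unfolding ereal_tendsto_simps1
        by (rule continuous_on_tendsto_compose[OF contL sigmoid_bot]) (use sig01 in auto)
      show "(((\<lambda>u. L (sigmoid u)) \<circ> real_of_ereal) \<longlongrightarrow> L 1) (at_left \<infinity>)"
        unfolding ereal_tendsto_simps1
        by (rule continuous_on_tendsto_compose[OF contL sigmoid_top]) (use sig01 in auto)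
    qed
    then show ?thesis
      by (simp add: interval_lebesgue_integral_def set_lebesgue_integral_def)
  qed
  define K where "K = (LINT u|lborel. \<bar>u\<bar> * logistic_density u)"
  define E where "E \<tau> = (LINT u|lborel. logistic_density (\<eta> - \<tau> * u) * g u)" for \<tau>
  have est: "gs_estimator L \<tau> \<eta> z = g ((\<eta> - z) / \<tau>) / \<tau>" if "\<tau> > 0" for \<tau> z
  proof -
    have "((\<lambda>e. L (sigmoid ((e - z) / \<tau>))) has_real_derivative g ((\<eta> - z) / \<tau>) * (1 / \<tau>)) (at \<eta>)"
      by (rule DERIV_chain2[OF LSder]) (use that in \<open>auto intro!: derivative_eq_intros\<close>)
    then show ?thesis
      unfolding gs_estimator_def sigmoid_temp_def by (simp add: DERIV_imp_deriv)
  qed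
  have expE: "gs_expectation L \<tau> \<eta> = E \<tau>" if "\<tau> > 0" for \<tau>
  proof -
    have "gs_expectation L \<tau> \<eta> = (LINT z|lborel. logistic_density z * (g ((\<eta> - z) / \<tau>) / \<tau>))"
      unfolding gs_expectation_def using est[OF that] by simp
    also have "\<dots> = \<bar>- \<tau>\<bar> *\<^sub>R (LINT u|lborel. logistic_density (\<eta> + (- \<tau>) * u) * (g ((\<eta> - (\<eta> + (- \<tau>) * u)) / \<tau>) / \<tau>))"
      by (rule lborel_integral_real_affine) (use that in simp)
    also have "(\<lambda>u. logistic_density (\<eta> + (- \<tau>) * u) * (g ((\<eta> - (\<eta> + (- \<tau>) * u)) / \<tau>) / \<tau>))
       = (\<lambda>u. logistic_density (\<eta> - \<tau> * u) * g u / \<tau>)"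
      using that by (auto simp: fun_eq_iff)
    also have "\<bar>- \<tau>\<bar> *\<^sub>R (LINT u|lborel. logistic_density (\<eta> - \<tau> * u) * g u / \<tau>) = E \<tau>"
      using that by (simp add: integral_divide_zero E_def)
    finally show ?thesis .
  qed
  have bound: "\<bar>E \<tau> - logistic_density \<eta> * (L 1 - L 0)\<bar> \<le> (M * K) * \<tau>" if "\<tau> > 0" for \<tau>
  proof -
    have int1: "integrable lborel (\<lambda>u. logistic_density (\<eta> - \<tau> * u) * g u)"
    proof (rule Bochner_Integration.integrable_bound[OF g_int])
      show "(\<lambda>u. logistic_density (\<eta> - \<tau> * u) * g u) \<in> borel_measurable lborel"
        by (simp add: borel_measurable_continuous_onI continuous_intros contg)
      show "AE x in lborel. norm (logistic_density (\<eta> - \<tau> * x) * g x) \<le> norm (g x)"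
      proof (rule AE_I2)
        fix x
        have "logistic_density (\<eta> - \<tau> * x) * \<bar>g x\<bar> \<le> 1 * \<bar>g x\<bar>"
          using ld_le[of "\<eta> - \<tau> * x"] by (intro mult_right_mono) auto
        then show "norm (logistic_density (\<eta> - \<tau> * x) * g x) \<le> norm (g x)"
          using ld_nonneg[of "\<eta> - \<tau> * x"] by (simp add: abs_mult)
      qed
    qed
    have "E \<tau> - logistic_density \<eta> * (L 1 - L 0)
        = (LINT u|lborel. logistic_density (\<eta> - \<tau> * u) * g u) - (LINT u|lborel. logistic_density \<eta> * g u)"
      by (simp add: E_def g_total)
    also have "\<dots> = (LINT u|lborel. logistic_density (\<eta> - \<tau> * u) * g u - logistic_density \<eta> * g u)"
      by (rule Bochner_Integration.integral_diff[symmetric]) (auto intro!: int1 integrable_mult_right g_int)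
    finally have eq: "E \<tau> - logistic_density \<eta> * (L 1 - L 0)
        = (LINT u|lborel. logistic_density (\<eta> - \<tau> * u) * g u - logistic_density \<eta> * g u)" .
    have "\<bar>LINT u|lborel. logistic_density (\<eta> - \<tau> * u) * g u - logistic_density \<eta> * g u\<bar>
        \<le> (LINT u|lborel. (M * \<tau>) * (\<bar>u\<bar> * logistic_density u))"
    proof (rule integral_abs_bound_integral)
      show "integrable lborel (\<lambda>u. logistic_density (\<eta> - \<tau> * u) * g u - logistic_density \<eta> * g u)"
        by (auto intro!: int1 integrable_mult_right g_int)
      show "integrable lborel (\<lambda>u. (M * \<tau>) * (\<bar>u\<bar> * logistic_density u))"
        by (intro integrable_mult_right ld_moment_integrable)
      fix u
      have "\<bar>logistic_density (\<eta> - \<tau> * u) * g u - logistic_density \<eta> * g u\<bar>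
          = \<bar>logistic_density (\<eta> - \<tau> * u) - logistic_density \<eta>\<bar> * \<bar>g u\<bar>"
        by (simp add: abs_mult flip: left_diff_distrib)
      also have "\<dots> \<le> (\<tau> * \<bar>u\<bar>) * (M * logistic_density u)"
      proof (rule mult_mono)
        show "\<bar>logistic_density (\<eta> - \<tau> * u) - logistic_density \<eta>\<bar> \<le> \<tau> * \<bar>u\<bar>"
          using ld_lip[of "\<eta> - \<tau> * u" \<eta>] that by (simp add: abs_mult)
      qed (use g_bound that in auto)
      also have "\<dots> = (M * \<tau>) * (\<bar>u\<bar> * logistic_density u)" by simp
      finally show "\<bar>logistic_density (\<eta> - \<tau> * u) * g u - logistic_density \<eta> * g u\<bar>
          \<le> (M * \<tau>) * (\<bar>u\<bar> * logistic_density u)" .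
    qed
    also have "\<dots> = (M * K) * \<tau>" by (simp add: K_def)
    finally show ?thesis using eq by simp
  qed
  have ev: "\<forall>\<^sub>F \<tau> in at_right 0. norm (gs_expectation L \<tau> \<eta> - logistic_density \<eta> * (L 1 - L 0)) \<le> (M * K) * norm \<tau>"
    using eventually_at_right_less[of 0]
    by eventually_elim (use bound expE in auto)
  have ev2: "\<forall>\<^sub>F \<tau> in at_right 0. norm (gs_expectation L \<tau> \<eta> - logistic_density \<eta> * (L 1 - L 0)) \<le> (M * K) * \<tau>"
    using ev eventually_at_right_less[of 0]
    by eventually_elim auto
  have "((\<lambda>\<tau>. (M * K) * \<tau>) \<longlongrightarrow> 0) (at_right 0)"
    by (rule tendsto_eq_intros | simp)+
  then have "((\<lambda>\<tau>. gs_expectation L \<tau> \<eta> - logistic_density \<eta> * (L 1 - L 0)) \<longlongrightarrow> 0) (at_right 0)"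
    by (rule Lim_null_comparison[OF ev2])
  then have "((\<lambda>\<tau>. gs_expectation L \<tau> \<eta>) \<longlongrightarrow> logistic_density \<eta> * (L 1 - L 0)) (at_right 0)"
    by (rule LIM_zero_cancel)
  moreover have "(\<lambda>\<tau>. gs_expectation L \<tau> \<eta> - logistic_density \<eta> * (L 1 - L 0)) \<in> O[at_right 0](\<lambda>\<tau>. \<tau>)"
    by (rule bigoI[OF ev])
  ultimately show ?thesis by blast
qed

end
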